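(* Let $\mathbf n=(n_1,\dots,n_r)$ and $\mathbf d=(d_1,\dots,d_r)$ be $r$-tuples of positive integers with $n_1\leq\dots\leq n_r$, and let $SV^{\mathbf n}_{\mathbf d}\subseteq\mathbb P^{N(\mathbf n,\mathbf d)}$, $N(\mathbf n,\mathbf d)=\prod_{i=1}^r\binom{n_i+d_i}{n_i}-1$, be the Segre–Veronese variety, i.e. the image of $\mathbb P^{n_1}\times\dots\times\mathbb P^{n_r}$ under the embedding given by $\mathcal O(d_1,\dots,d_r)$. If $h$ is a positive integer with $h\leq\lceil d_i/2\rceil$ for all $i=1,\dots,r$, then the Terracini locus $T_h(SV^{\mathbf n}_{\mathbf d})$ is empty.
   Context: For a smooth irreducible non-degenerate $X\subseteq\mathbb P^N$ of dimension $n$, the $h$-th Terracini locus $T_h(X)$ is the closure in $X^h/S_h$ of the set of unordered $h$-tuples of pairwise distinct points $x_1,\dots,x_h\in X$ with $\dim\langle T_{x_1}X,\dots,T_{x_h}X\rangle<\min\{hn+h-1,N\}$. *)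

theory Defs
  imports "HOL-Analysis.Analysis" "HOL-Library.Function_Algebras"
begin

text \<open>Segre--Veronese variety of P^{n_1} x ... x P^{n_r} embedded by O(d_1,...,d_r),
  over the complex numbers.  ns = [n_1,...,n_r], ds = [d_1,...,d_r].
  A point of the product is x :: nat => nat => complex, with x i = homogeneous
  coordinates (x i 0, ..., x i (n_i)) of the i-th factor (i < r).
  Coordinates of P^N are indexed by exponent tuples a, a i = exponent vector of
  degree d_i in the variables of the i-th factor (monomial basis).\<close>

definition sv_exps :: "nat list \<Rightarrow> nat list \<Rightarrow> (nat \<Rightarrow> nat \<Rightarrow> nat) set" where
  "sv_exps ns ds = {a. \<forall>i.
      (i < length ns \<longrightarrow> (\<forall>j. ns ! i < j \<longrightarrow> a i j = 0) \<and> (\<Sum>j\<le>ns ! i. a i j) = ds ! i)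
    \<and> (length ns \<le> i \<longrightarrow> (\<forall>j. a i j = 0))}"

text \<open>Affine-cone parametrisation of the Segre--Veronese variety (coordinates outside the
  index set are set to 0).\<close>
definition sv_coord :: "nat list \<Rightarrow> nat list \<Rightarrow> (nat \<Rightarrow> nat \<Rightarrow> complex) \<Rightarrow> (nat \<Rightarrow> nat \<Rightarrow> nat) \<Rightarrow> complex" where
  "sv_coord ns ds x a =
     (if a \<in> sv_exps ns ds then (\<Prod>i<length ns. \<Prod>j\<le>ns ! i. x i j ^ a i j) else 0)"

definition sv_valid :: "nat list \<Rightarrow> (nat \<Rightarrow> nat \<Rightarrow> complex) \<Rightarrow> bool" where
  "sv_valid ns x \<longleftrightarrow> (\<forall>i<length ns. \<exists>j\<le>ns ! i. x i j \<noteq> 0)"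

definition fscale :: "complex \<Rightarrow> ('i \<Rightarrow> complex) \<Rightarrow> ('i \<Rightarrow> complex)" where
  "fscale c f = (\<lambda>m. c * f m)"

text \<open>Linear space spanned by the embedded tangent space T_x X (cone over it): spanned by the
  partial derivatives of the parametrisation at x.\<close>
definition sv_tangent_gens :: "nat list \<Rightarrow> nat list \<Rightarrow> (nat \<Rightarrow> nat \<Rightarrow> complex) \<Rightarrow> ((nat \<Rightarrow> nat \<Rightarrow> nat) \<Rightarrow> complex) set" where
  "sv_tangent_gens ns ds x =
     {(\<lambda>a. deriv (\<lambda>t. sv_coord ns ds (x(i := (x i)(j := t))) a) (x i j)) | i j. i < length ns \<and> j \<le> ns ! i}"

definition proj_span_dim :: "((nat \<Rightarrow> nat \<Rightarrow> nat) \<Rightarrow> complex) set \<Rightarrow> int" where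
  "proj_span_dim V = int (vector_space.dim fscale V) - 1"

definition sv_n :: "nat list \<Rightarrow> nat" where "sv_n ns = sum_list ns"

definition sv_N :: "nat list \<Rightarrow> nat list \<Rightarrow> nat" where
  "sv_N ns ds = (\<Prod>i<length ns. (ns ! i + ds ! i) choose (ns ! i)) - 1"

text \<open>Ordered h-tuples (k < h) of pairwise distinct points of the variety violating the
  expected dimension of the span of tangent spaces.  The Terracini locus T_h is the closure
  of (the image in X^h/S_h of) this set; it is empty iff this set is empty.\<close>
definition terracini_tuples :: "nat list \<Rightarrow> nat list \<Rightarrow> nat \<Rightarrow> (nat \<Rightarrow> nat \<Rightarrow> nat \<Rightarrow> complex) set" where
  "terracini_tuples ns ds h = {x.
      (\<forall>k<h. sv_valid ns (x k))
    \<and> (\<forall>k<h. \<forall>l<h. k \<noteq> l \<longrightarrow> \<not> (\<exists>c. sv_coord ns ds (x l) = fscale c (sv_coord ns ds (x k))))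
    \<and> proj_span_dim (\<Union>k<h. sv_tangent_gens ns ds (x k))
        < min (int (h * sv_n ns + h) - 1) (int (sv_N ns ds))}"

end

theory Submission
  imports Defs
begin

definition sv_monom :: "nat list \<Rightarrow> (nat \<Rightarrow> nat \<Rightarrow> complex) \<Rightarrow> (nat \<Rightarrow> nat \<Rightarrow> nat) \<Rightarrow> complex" where
  "sv_monom ns x a = (\<Prod>i<length ns. \<Prod>j\<le>ns ! i. x i j ^ a i j)"

definition lin :: "nat list \<Rightarrow> nat \<times> (nat \<Rightarrow> complex) \<Rightarrow> (nat \<Rightarrow> nat \<Rightarrow> complex) \<Rightarrow> complex" where
  "lin ns q x = (\<Sum>j\<le>ns ! fst q. snd q j * x (fst q) j)"

definition plf :: "nat list \<Rightarrow> (nat \<times> (nat \<Rightarrow> complex)) list \<Rightarrow> (nat \<Rightarrow> nat \<Rightarrow> complex) \<Rightarrow> complex" where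
  "plf ns L x = prod_list (map (\<lambda>q. lin ns q x) L)"

definition cnts :: "nat list \<Rightarrow> (nat \<times> (nat \<Rightarrow> complex)) list \<Rightarrow> nat list" where
  "cnts ns L = map (\<lambda>i. length (filter (\<lambda>q. fst q = i) L)) [0..<length ns]"

definition bump :: "(nat \<Rightarrow> nat \<Rightarrow> nat) \<Rightarrow> nat \<Rightarrow> nat \<Rightarrow> (nat \<Rightarrow> nat \<Rightarrow> nat)" where
  "bump a i j = a(i := (a i)(j := a i j + 1))"

lemma finite_exps: "finite (sv_exps ns ds)"
proof -
  define K where "K = (\<Sum>i<length ns. ns ! i)"
  define M where "M = (\<Sum>i<length ns. ds ! i)"
  define B where "B = {g::nat\<Rightarrow>nat. \<forall>j. (j \<in> {..K} \<longrightarrow> g j \<in> {..M}) \<and> (j \<notin> {..K} \<longrightarrow> g j = 0)}"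
  have fB: "finite B" unfolding B_def by (rule finite_set_of_finite_funs) auto
  define C where "C = {a::nat\<Rightarrow>nat\<Rightarrow>nat. \<forall>i. (i \<in> {..<length ns} \<longrightarrow> a i \<in> B) \<and> (i \<notin> {..<length ns} \<longrightarrow> a i = (\<lambda>_. 0))}"
  have fC: "finite C" unfolding C_def by (rule finite_set_of_finite_funs) (auto simp: fB)
  have "sv_exps ns ds \<subseteq> C"
  proof
    fix a assume a: "a \<in> sv_exps ns ds"
    show "a \<in> C" unfolding C_def mem_Collect_eq
    proof (intro allI conjI impI)
      fix i assume i: "i \<in> {..<length ns}"
      have z: "\<forall>j. ns ! i < j \<longrightarrow> a i j = 0" and s: "(\<Sum>j\<le>ns ! i. a i j) = ds ! i"
        using a i unfolding sv_exps_def by auto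
      have niK: "ns ! i \<le> K" unfolding K_def using i
        by (intro member_le_sum) auto
      have diM: "ds ! i \<le> M" unfolding M_def using i
        by (intro member_le_sum) auto
      show "a i \<in> B" unfolding B_def mem_Collect_eq
      proof (intro allI conjI impI)
        fix j assume j: "j \<in> {..K}"
        show "a i j \<in> {..M}"
        proof (cases "j \<le> ns ! i")
          case True
          have "a i j \<le> (\<Sum>j\<le>ns ! i. a i j)"
            using True by (intro member_le_sum) auto
          then show ?thesis using s diM by auto
        next
          case False then show ?thesis using z by auto
        qed
      next
        fix j assume "j \<notin> {..K}"
        then show "a i j = 0" using z niK by auto
      qed
    next
      fix i assume "i \<notin> {..<length ns}"
      then show "a i = (\<lambda>_. 0)" using a unfolding sv_exps_def by auto
    qed
  qed
  then show ?thesis using fC finite_subset by blast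
qed

lemma monom_bump:
  assumes "i < length ns" "j \<le> ns ! i"
  shows "sv_monom ns x (bump a i j) = x i j * sv_monom ns x a"
proof -
  have e: "x i' j' ^ bump a i j i' j' = x i' j' ^ a i' j' * (if i' = i then (if j' = j then x i j else 1) else 1)" for i' j'
    by (auto simp: bump_def)
  have "sv_monom ns x (bump a i j) = (\<Prod>i'<length ns. (\<Prod>j'\<le>ns ! i'. x i' j' ^ a i' j') *
          (if i' = i then (\<Prod>j'\<le>ns ! i'. (if j' = j then x i j else 1)) else 1))"
    unfolding sv_monom_def e prod.distrib by (intro prod.cong refl arg_cong2[where f=times]) auto
  also have "\<dots> = sv_monom ns x a * (\<Prod>i'<length ns. (if i' = i then (\<Prod>j'\<le>ns ! i'. (if j' = j then x i j else 1)) else 1))"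
    unfolding sv_monom_def prod.distrib ..
  also have "(\<Prod>i'<length ns. (if i' = i then (\<Prod>j'\<le>ns ! i'. (if j' = j then x i j else 1)) else 1)) = x i j"
    using assms by (subst prod.delta) (auto simp: prod.delta)
  finally show ?thesis by simp
qed

lemma bump_exps:
  assumes a: "a \<in> sv_exps ns ds" and i: "i < length ns" and j: "j \<le> ns ! i" and l: "length ds = length ns"
  shows "bump a i j \<in> sv_exps ns (ds[i := ds ! i + 1])"
  unfolding sv_exps_def
proof (intro CollectI allI conjI impI)
  fix i' j' assume i': "i' < length ns" and "ns ! i' < j'"
  then show "bump a i j i' j' = 0"
    using a j unfolding sv_exps_def by (auto simp: bump_def)
next
  fix i' assume i': "i' < length ns"
  have z: "\<forall>j. ns ! i' < j \<longrightarrow> a i' j = 0" and s: "(\<Sum>j\<le>ns ! i'. a i' j) = ds ! i'"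
    using a i' unfolding sv_exps_def by auto
  show "(\<Sum>j'\<le>ns ! i'. bump a i j i' j') = ds[i := ds ! i + 1] ! i'"
  proof (cases "i' = i")
    case True
    have "(\<Sum>j'\<le>ns ! i'. bump a i j i' j') = (\<Sum>j'\<le>ns ! i'. a i' j' + (if j' = j then 1 else 0))"
      using True by (intro sum.cong) (auto simp: bump_def)
    also have "\<dots> = ds ! i' + 1" using s True j by (simp add: sum.distrib)
    finally show ?thesis using True i l by simp
  next
    case False
    then show ?thesis using s by (simp add: bump_def)
  qed
next
  fix i' j' assume "length ns \<le> i'"
  then show "bump a i j i' j' = 0" using a i unfolding sv_exps_def bump_def by auto
qed

lemma cnts_Cons:
  assumes "i < length ns"
  shows "cnts ns ((i, w) # L) = (cnts ns L)[i := cnts ns L ! i + 1]"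
  using assms by (intro nth_equalityI) (auto simp: cnts_def nth_list_update)

lemma exps_zero: "sv_exps ns (cnts ns []) = {\<lambda>_ _. 0}"
proof -
  have "a = (\<lambda>_ _. 0)" if "a \<in> sv_exps ns (cnts ns [])" for a
  proof (intro ext)
    fix i j
    show "a i j = 0"
    proof (cases "i < length ns")
      case True
      then have z: "\<forall>j. ns ! i < j \<longrightarrow> a i j = 0" and s: "(\<Sum>j\<le>ns ! i. a i j) = 0"
        using that unfolding sv_exps_def cnts_def by auto
      then show ?thesis by (cases "j \<le> ns ! i") auto
    next
      case False then show ?thesis using that unfolding sv_exps_def by auto
    qed
  qed
  moreover have "(\<lambda>_ _. 0) \<in> sv_exps ns (cnts ns [])"
    unfolding sv_exps_def cnts_def by auto
  ultimately show ?thesis by blast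
qed

lemma plf_forms:
  assumes "\<forall>q\<in>set L. fst q < length ns"
  shows "\<exists>coef. \<forall>x. plf ns L x = (\<Sum>a\<in>sv_exps ns (cnts ns L). coef a * sv_monom ns x a)"
  using assms
proof (induction L)
  case Nil
  show ?case unfolding exps_zero by (auto simp: plf_def sv_monom_def)
next
  case (Cons q L)
  obtain i w where q: "q = (i, w)" by (cases q)
  have i: "i < length ns" using Cons.prems q by auto
  obtain coef where cf: "\<forall>x. plf ns L x = (\<Sum>a\<in>sv_exps ns (cnts ns L). coef a * sv_monom ns x a)"
    using Cons by auto
  define E where "E = sv_exps ns (cnts ns L)"
  define E' where "E' = sv_exps ns (cnts ns (q # L))"
  define S where "S = {..ns ! i} \<times> E"
  have fS: "finite S" unfolding S_def E_def by (auto simp: finite_exps)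
  have fE': "finite E'" unfolding E'_def by (auto simp: finite_exps)
  have lc: "length (cnts ns L) = length ns" by (simp add: cnts_def)
  have sub: "(\<lambda>(j, a). bump a i j) ` S \<subseteq> E'"
    unfolding S_def E_def E'_def q cnts_Cons[OF i]
    using bump_exps[OF _ i _ lc] by auto
  define coef' where "coef' b = (\<Sum>p\<in>{p. p \<in> S \<and> (\<lambda>(j, a). bump a i j) p = b}. w (fst p) * coef (snd p))" for b
  have "plf ns (q # L) x = (\<Sum>b\<in>E'. coef' b * sv_monom ns x b)" for x
  proof -
    have "plf ns (q # L) x = lin ns q x * plf ns L x"
      unfolding plf_def by simp
    also have "\<dots> = (\<Sum>j\<le>ns ! i. w j * x i j) * (\<Sum>a\<in>E. coef a * sv_monom ns x a)"
      using cf by (simp add: lin_def q E_def)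
    also have "\<dots> = (\<Sum>j\<le>ns ! i. \<Sum>a\<in>E. w j * coef a * sv_monom ns x (bump a i j))"
      by (simp add: sum_product monom_bump[OF i] mult_ac sum.swap[of _ E])
    also have "\<dots> = (\<Sum>p\<in>S. w (fst p) * coef (snd p) * sv_monom ns x ((\<lambda>(j, a). bump a i j) p))"
      unfolding S_def by (simp add: sum.cartesian_product split_def)
    also have "\<dots> = (\<Sum>b\<in>E'. \<Sum>p\<in>{p. p \<in> S \<and> (\<lambda>(j, a). bump a i j) p = b}. w (fst p) * coef (snd p) * sv_monom ns x ((\<lambda>(j, a). bump a i j) p))"
      by (rule sum.group[OF fS fE' sub, symmetric])
    also have "\<dots> = (\<Sum>b\<in>E'. coef' b * sv_monom ns x b)"
      unfolding coef'_def sum_distrib_right by (intro sum.cong refl) auto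
    finally show ?thesis .
  qed
  then show ?case unfolding E'_def by blast
qed

definition sv_line :: "(nat \<Rightarrow> nat \<Rightarrow> complex) \<Rightarrow> nat \<Rightarrow> nat \<Rightarrow> complex \<Rightarrow> (nat \<Rightarrow> nat \<Rightarrow> complex)" where
  "sv_line p i j t = p(i := (p i)(j := t))"

lemma line_at[simp]: "sv_line p i j (p i j) = p"
  by (simp add: sv_line_def)

lemma line_coord_deriv:
  "((\<lambda>t. sv_line p i j t i' j') has_field_derivative (if i' = i \<and> j' = j then 1 else 0)) (at z)"
  by (cases "i' = i"; cases "j' = j") (auto simp: sv_line_def intro!: derivative_eq_intros)

lemma line_coord_holo: "(\<lambda>t. sv_line p i j t i' j') holomorphic_on UNIV"
  by (cases "i' = i"; cases "j' = j") (auto simp: sv_line_def intro!: holomorphic_intros)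

lemma monom_line_diff: "(\<lambda>t. sv_monom ns (sv_line p i j t) a) field_differentiable at z"
proof -
  have "(\<lambda>t. sv_monom ns (sv_line p i j t) a) holomorphic_on UNIV"
    unfolding sv_monom_def by (intro holomorphic_intros line_coord_holo)
  then show ?thesis by (rule holomorphic_on_imp_differentiable_at) auto
qed

lemma lin_line_deriv:
  "((\<lambda>t. lin ns q (sv_line p i j t)) has_field_derivative (if fst q = i \<and> j \<le> ns ! fst q then snd q j else 0)) (at z)"
proof -
  have "((\<lambda>t. lin ns q (sv_line p i j t)) has_field_derivative
     (\<Sum>j'\<le>ns ! fst q. snd q j' * (if fst q = i \<and> j' = j then 1 else 0))) (at z)"
    unfolding lin_def by (intro DERIV_sum DERIV_cmult line_coord_deriv)
  also have "(\<Sum>j'\<le>ns ! fst q. snd q j' * (if fst q = i \<and> j' = j then 1 else 0))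
      = (if fst q = i \<and> j \<le> ns ! fst q then snd q j else 0)"
    by (cases "fst q = i") (auto simp: if_distrib cong: if_cong)
  finally show ?thesis .
qed

lemma plf_line_diff: "\<exists>D. ((\<lambda>t. plf ns L (sv_line p i j t)) has_field_derivative D) (at z)"
proof (induction L)
  case Nil then show ?case by (auto simp: plf_def intro!: derivative_eq_intros)
next
  case (Cons q L)
  then obtain D where D: "((\<lambda>t. plf ns L (sv_line p i j t)) has_field_derivative D) (at z)" by auto
  show ?case unfolding plf_def list.map prod_list.Cons
    using DERIV_mult[OF lin_line_deriv D[unfolded plf_def]] by blast
qed

lemma plf_append: "plf ns (A @ B) x = plf ns A x * plf ns B x"
  by (simp add: plf_def)

lemma plf_double_zero:
  assumes "lin ns q p = 0"
  shows "plf ns (A @ q # q # B) p = 0"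
    and "deriv (\<lambda>t. plf ns (A @ q # q # B) (sv_line p i j t)) (p i j) = 0"
proof -
  have e: "plf ns (A @ q # q # B) x = lin ns q x * lin ns q x * plf ns (A @ B) x" for x
    by (simp add: plf_def)
  show "plf ns (A @ q # q # B) p = 0" using assms e by simp
  obtain D where D: "((\<lambda>t. plf ns (A @ B) (sv_line p i j t)) has_field_derivative D) (at (p i j))"
    using plf_line_diff by blast
  show "deriv (\<lambda>t. plf ns (A @ q # q # B) (sv_line p i j t)) (p i j) = 0"
    unfolding e using DERIV_imp_deriv[OF DERIV_mult[OF DERIV_mult[OF lin_line_deriv lin_line_deriv] D]] assms by simp
qed

lemma plf_single_zero:
  assumes "lin ns q p = 0"
  shows "plf ns (q # R) p = 0"
    and "deriv (\<lambda>t. plf ns (q # R) (sv_line p i j t)) (p i j)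
        = (if fst q = i \<and> j \<le> ns ! fst q then snd q j else 0) * plf ns R p"
proof -
  show "plf ns (q # R) p = 0" using assms by (simp add: plf_def)
  obtain D where D: "((\<lambda>t. plf ns R (sv_line p i j t)) has_field_derivative D) (at (p i j))"
    using plf_line_diff by blast
  have e: "plf ns (q # R) x = lin ns q x * plf ns R x" for x
    by (simp add: plf_def)
  show "deriv (\<lambda>t. plf ns (q # R) (sv_line p i j t)) (p i j)
        = (if fst q = i \<and> j \<le> ns ! fst q then snd q j else 0) * plf ns R p"
    unfolding e using DERIV_imp_deriv[OF DERIV_mult[OF lin_line_deriv D]] assms by simp
qed

lemma plf_nonzero: "(\<forall>q\<in>set R. lin ns q p \<noteq> 0) \<Longrightarrow> plf ns R p \<noteq> 0"
  by (induction R) (auto simp: plf_def)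

lemma vs_fscale: "vector_space (fscale :: complex \<Rightarrow> ('i \<Rightarrow> complex) \<Rightarrow> _)"
  by unfold_locales (auto simp: fscale_def fun_eq_iff algebra_simps)

lemma sum_fun_apply: "(\<Sum>s\<in>S. f s) x = (\<Sum>s\<in>S. f s x)"
  by (induction S rule: infinite_finite_induct) auto

definition tv :: "nat list \<Rightarrow> nat list \<Rightarrow> (nat \<Rightarrow> nat \<Rightarrow> complex) \<Rightarrow> nat \<Rightarrow> nat \<Rightarrow> ((nat \<Rightarrow> nat \<Rightarrow> nat) \<Rightarrow> complex)" where
  "tv ns ds p i j = (\<lambda>a. deriv (\<lambda>t. sv_coord ns ds (sv_line p i j t) a) (p i j))"

lemma tv_in: "i < length ns \<Longrightarrow> j \<le> ns ! i \<Longrightarrow> tv ns ds p i j \<in> sv_tangent_gens ns ds p"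
  unfolding sv_tangent_gens_def tv_def sv_line_def by blast

lemma sv_coord_monom: "a \<in> sv_exps ns ds \<Longrightarrow> sv_coord ns ds x a = sv_monom ns x a"
  by (simp add: sv_coord_def sv_monom_def)

lemma pairing:
  assumes G: "\<forall>x. G x = (\<Sum>a\<in>sv_exps ns ds. coef a * sv_monom ns x a)"
  shows "(\<Sum>a\<in>sv_exps ns ds. coef a * sv_coord ns ds x a) = G x"
    and "(\<Sum>a\<in>sv_exps ns ds. coef a * tv ns ds p i j a) = deriv (\<lambda>t. G (sv_line p i j t)) (p i j)"
proof -
  show "(\<Sum>a\<in>sv_exps ns ds. coef a * sv_coord ns ds x a) = G x"
    using G by (simp add: sv_coord_monom)
  have d: "(\<lambda>t. coef a * sv_monom ns (sv_line p i j t) a) field_differentiable at z" for a z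
    by (intro field_differentiable_mult field_differentiable_const monom_line_diff)
  have "deriv (\<lambda>t. G (sv_line p i j t)) (p i j) = deriv (\<lambda>t. \<Sum>a\<in>sv_exps ns ds. coef a * sv_monom ns (sv_line p i j t) a) (p i j)"
    using G by simp
  also have "\<dots> = (\<Sum>a\<in>sv_exps ns ds. deriv (\<lambda>t. coef a * sv_monom ns (sv_line p i j t) a) (p i j))"
    by (rule deriv_sum[OF d])
  also have "\<dots> = (\<Sum>a\<in>sv_exps ns ds. coef a * tv ns ds p i j a)"
  proof (intro sum.cong refl)
    fix a assume a: "a \<in> sv_exps ns ds"
    have "(\<lambda>t. sv_coord ns ds (sv_line p i j t) a) = (\<lambda>t. sv_monom ns (sv_line p i j t) a)"
      using a by (simp add: sv_coord_monom)
    then show "deriv (\<lambda>t. coef a * sv_monom ns (sv_line p i j t) a) (p i j) = coef a * tv ns ds p i j a"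
      unfolding tv_def by (simp add: deriv_cmult monom_line_diff)
  qed
  finally show "(\<Sum>a\<in>sv_exps ns ds. coef a * tv ns ds p i j a) = deriv (\<lambda>t. G (sv_line p i j t)) (p i j)" ..
qed

lemma monom_split:
  assumes "i < length ns" "j \<le> ns ! i"
  shows "sv_monom ns y a = y i j ^ a i j * sv_monom ns (sv_line y i j 1) a"
proof -
  have e: "y i' j' ^ a i' j' = (if i' = i then (if j' = j then y i j ^ a i j else 1) else 1) * sv_line y i j 1 i' j' ^ a i' j'" for i' j'
    by (auto simp: sv_line_def)
  have "sv_monom ns y a = (\<Prod>i'<length ns. \<Prod>j'\<le>ns ! i'. (if i' = i then (if j' = j then y i j ^ a i j else 1) else 1) * sv_line y i j 1 i' j' ^ a i' j')"
    unfolding sv_monom_def by (intro prod.cong refl e)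
  also have "\<dots> = (\<Prod>i'<length ns. (if i' = i then (\<Prod>j'\<le>ns ! i'. (if j' = j then y i j ^ a i j else 1)) else 1) *
          (\<Prod>j'\<le>ns ! i'. sv_line y i j 1 i' j' ^ a i' j'))"
    by (simp only: prod.distrib) (intro prod.cong refl arg_cong2[where f=times], auto)
  also have "\<dots> = (\<Prod>i'<length ns. (if i' = i then (\<Prod>j'\<le>ns ! i'. (if j' = j then y i j ^ a i j else 1)) else 1)) * sv_monom ns (sv_line y i j 1) a"
    unfolding sv_monom_def prod.distrib ..
  also have "(\<Prod>i'<length ns. (if i' = i then (\<Prod>j'\<le>ns ! i'. (if j' = j then y i j ^ a i j else 1)) else 1)) = y i j ^ a i j"
    using assms by (subst prod.delta) (auto simp: prod.delta)
  finally show ?thesis .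
qed

lemma euler:
  assumes i: "i < length ns" and l: "length ds = length ns"
  shows "(\<Sum>j\<le>ns ! i. fscale (p i j) (tv ns ds p i j)) = fscale (of_nat (ds ! i)) (sv_coord ns ds p)"
proof (rule ext)
  fix a
  show "(\<Sum>j\<le>ns ! i. fscale (p i j) (tv ns ds p i j)) a = fscale (of_nat (ds ! i)) (sv_coord ns ds p) a"
  proof (cases "a \<in> sv_exps ns ds")
    case False
    then show ?thesis by (simp add: sum_fun_apply fscale_def tv_def sv_coord_def)
  next
    case True
    have t: "p i j * tv ns ds p i j a = of_nat (a i j) * sv_monom ns p a" if j: "j \<le> ns ! i" for j
    proof -
      define C where "C = sv_monom ns (sv_line p i j 1) a"
      have lf: "(\<lambda>t. sv_coord ns ds (sv_line p i j t) a) = (\<lambda>t. t ^ a i j * C)"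
      proof
        fix t
        have "sv_line (sv_line p i j t) i j 1 = sv_line p i j 1" by (simp add: sv_line_def)
        then show "sv_coord ns ds (sv_line p i j t) a = t ^ a i j * C"
          using True monom_split[OF i j, of "sv_line p i j t" a] unfolding C_def
          by (simp add: sv_coord_monom sv_line_def)
      qed
      have "tv ns ds p i j a = of_nat (a i j) * p i j ^ (a i j - 1) * C"
        unfolding tv_def lf
        by (rule DERIV_imp_deriv) (auto intro!: derivative_eq_intros)
      moreover have "sv_monom ns p a = p i j ^ a i j * C"
        unfolding C_def by (rule monom_split[OF i j])
      ultimately show ?thesis
        by (cases "a i j") (auto simp: algebra_simps)
    qed
    have "(\<Sum>j\<le>ns ! i. fscale (p i j) (tv ns ds p i j)) a = (\<Sum>j\<le>ns ! i. of_nat (a i j) * sv_monom ns p a)"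
      by (simp add: sum_fun_apply fscale_def t)
    also have "\<dots> = of_nat (\<Sum>j\<le>ns ! i. a i j) * sv_monom ns p a"
      by (simp add: sum_distrib_right)
    also have "(\<Sum>j\<le>ns ! i. a i j) = ds ! i"
      using True i unfolding sv_exps_def by auto
    finally show ?thesis using True by (simp add: fscale_def sv_coord_monom)
  qed
qed

lemma sep:
  fixes u v :: "nat \<Rightarrow> complex"
  assumes u: "\<exists>j\<le>n. u j \<noteq> 0" and v: "\<exists>j\<le>n. v j \<noteq> 0"
    and np: "\<not> (\<exists>\<mu>. \<forall>j\<le>n. v j = \<mu> * u j)"
  shows "\<exists>w. (\<Sum>j\<le>n. w j * v j) = 0 \<and> (\<Sum>j\<le>n. w j * u j) \<noteq> 0"
proof -
  obtain j0 where j0: "j0 \<le> n" "v j0 \<noteq> 0" using v by auto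
  have "\<exists>j1\<le>n. u j1 * v j0 - u j0 * v j1 \<noteq> 0"
  proof (rule ccontr)
    assume "\<not> ?thesis"
    then have m: "\<forall>j\<le>n. u j * v j0 = u j0 * v j" by auto
    have u0: "u j0 \<noteq> 0"
    proof
      assume "u j0 = 0"
      then have "\<forall>j\<le>n. u j = 0" using m j0 by auto
      then show False using u by auto
    qed
    have "\<forall>j\<le>n. v j = (v j0 / u j0) * u j"
      using m u0 by (auto simp: field_simps)
    then show False using np by blast
  qed
  then obtain j1 where j1: "j1 \<le> n" "u j1 * v j0 - u j0 * v j1 \<noteq> 0" by auto
  have ne: "j1 \<noteq> j0" using j1 by auto
  define w where "w j = (if j = j1 then v j0 else if j = j0 then - v j1 else 0)" for j
  have s: "(\<Sum>j\<le>n. w j * f j) = v j0 * f j1 - v j1 * f j0" for f :: "nat \<Rightarrow> complex"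
  proof -
    have "(\<Sum>j\<le>n. w j * f j) = (\<Sum>j\<le>n. (if j = j1 then v j0 * f j1 else 0) + (if j = j0 then - v j1 * f j0 else 0))"
      by (intro sum.cong) (auto simp: w_def ne)
    also have "\<dots> = v j0 * f j1 - v j1 * f j0"
      using j0 j1 by (simp add: sum.distrib)
    finally show ?thesis .
  qed
  have "(\<Sum>j\<le>n. w j * v j) = 0" by (simp add: s)
  moreover have "(\<Sum>j\<le>n. w j * u j) \<noteq> 0"
    unfolding s using j1 by (simp add: mult.commute)
  ultimately show ?thesis by blast
qed

lemma prop_coord:
  assumes l: "length ds = length ns"
    and pr: "\<forall>i<length ns. \<exists>\<mu>. \<forall>j\<le>ns ! i. y i j = \<mu> * x i j"
  shows "\<exists>c. sv_coord ns ds y = fscale c (sv_coord ns ds x)"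
proof -
  obtain mu where mu: "\<forall>i<length ns. \<forall>j\<le>ns ! i. y i j = mu i * x i j"
    using pr by metis
  define c where "c = (\<Prod>i<length ns. mu i ^ (ds ! i))"
  have "sv_coord ns ds y a = c * sv_coord ns ds x a" for a
  proof (cases "a \<in> sv_exps ns ds")
    case True
    have "sv_monom ns y a = (\<Prod>i<length ns. \<Prod>j\<le>ns ! i. mu i ^ a i j * x i j ^ a i j)"
      unfolding sv_monom_def using mu by (intro prod.cong refl) (auto simp: power_mult_distrib)
    also have "\<dots> = (\<Prod>i<length ns. mu i ^ (\<Sum>j\<le>ns ! i. a i j) * (\<Prod>j\<le>ns ! i. x i j ^ a i j))"
      by (simp add: prod.distrib power_sum)
    also have "\<dots> = c * sv_monom ns x a"
      unfolding c_def sv_monom_def prod.distrib[symmetric]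
      using True unfolding sv_exps_def by (intro prod.cong refl) auto
    finally show ?thesis using True by (simp add: sv_coord_monom)
  next
    case False then show ?thesis by (simp add: sv_coord_def)
  qed
  then show ?thesis by (auto simp: fscale_def fun_eq_iff)
qed

lemma cnt_pad:
  "length (filter (\<lambda>q. fst q = i) (concat (map (\<lambda>i'. replicate (m i') (i', v i')) [0..<r])))
    = (if i < r then m i else 0)"
  by (induction r) (auto simp: filter_replicate less_Suc_eq)

lemma cnts_append: "i < length ns \<Longrightarrow> cnts ns (A @ B) ! i = cnts ns A ! i + cnts ns B ! i"
  by (simp add: cnts_def)

lemma cnts_eq:
  assumes "length ds = length ns" "\<forall>i<length ns. cnts ns L ! i = ds ! i"
  shows "cnts ns L = ds"
  using assms by (intro nth_equalityI) (auto simp: cnts_def)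

lemma cnt_double: "length (filter P (concat (map (\<lambda>l. [f l, f l]) os))) \<le> 2 * length os"
  by (induction os) auto

lemma cnts_nth: "i < length ns \<Longrightarrow> cnts ns L ! i = length (filter (\<lambda>q. fst q = i) L)"
  by (simp add: cnts_def)

lemma lin_ek:
  assumes "jb \<le> ns ! i"
  shows "lin ns (i, \<lambda>j. if j = jb then 1 else 0) y = y i jb"
proof -
  have "lin ns (i, \<lambda>j. if j = jb then 1 else 0) y = (\<Sum>j\<le>ns ! i. if j = jb then y i j else 0)"
    unfolding lin_def by (intro sum.cong) auto
  also have "\<dots> = y i jb" using assms by (simp add: sum.delta)
  finally show ?thesis .
qed

lemma lin_sp:
  assumes "jb \<le> ns ! i" "j \<le> ns ! i" "j \<noteq> jb" "y i jb \<noteq> 0"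
  shows "lin ns (i, \<lambda>j'. if j' = j then 1 else if j' = jb then - y i j / y i jb else 0) y = 0"
proof -
  have "lin ns (i, \<lambda>j'. if j' = j then 1 else if j' = jb then - y i j / y i jb else 0) y
      = (\<Sum>j'\<le>ns ! i. (if j' = j then y i j else 0) + (if j' = jb then - y i j / y i jb * y i jb else 0))"
    unfolding lin_def using assms(3) by (intro sum.cong) auto
  also have "\<dots> = y i j + (- y i j / y i jb * y i jb)"
    using assms by (simp add: sum.distrib)
  also have "\<dots> = 0" using assms(4) by simp
  finally show ?thesis .
qed

lemma card_skip: "b \<le> n \<Longrightarrow> card {j. j \<le> n \<and> j \<noteq> b} = (n::nat)"
proof -
  assume "b \<le> n"
  have "{j. j \<le> n \<and> j \<noteq> b} = {..n} - {b}" by auto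
  then show ?thesis using \<open>b \<le> n\<close> by simp
qed

lemma plf_forms':
  assumes "\<forall>q\<in>set L. fst q < length ns" "cnts ns L = ds"
  shows "\<exists>coef. \<forall>x. plf ns L x = (\<Sum>a\<in>sv_exps ns ds. coef a * sv_monom ns x a)"
  using plf_forms[OF assms(1)] assms(2) by simp

lemma pair_sum:
  "(\<Sum>a\<in>E. coef a * (\<Sum>s\<in>S. fscale (c s) (v s)) a) = (\<Sum>s\<in>S. c s * (\<Sum>a\<in>E. coef a * v s a))"
  by (simp add: sum_fun_apply fscale_def sum_distrib_left mult_ac sum.swap[of _ E])

theorem corollary4p3:
  fixes ns ds :: "nat list" and h :: nat
  assumes "0 < length ns" and "length ds = length ns"
    and "\<forall>i<length ns. 0 < ns ! i \<and> 0 < ds ! i"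
    and "sorted ns"
    and "0 < h"
    and "\<forall>i<length ds. of_nat h \<le> \<lceil>real (ds ! i) / 2\<rceil>"
  shows "terracini_tuples ns ds h = {}"
proof (rule ccontr)
  assume "terracini_tuples ns ds h \<noteq> {}"
  then obtain x where x: "x \<in> terracini_tuples ns ds h" by blast
  note l = assms(2)
  have valid: "\<forall>k<h. sv_valid ns (x k)"
    and dist: "\<forall>k<h. \<forall>l<h. k \<noteq> l \<longrightarrow> \<not> (\<exists>c. sv_coord ns ds (x l) = fscale c (sv_coord ns ds (x k)))"
    and lt: "proj_span_dim (\<Union>k<h. sv_tangent_gens ns ds (x k)) < min (int (h * sv_n ns + h) - 1) (int (sv_N ns ds))"
    using x unfolding terracini_tuples_def by auto
  have dbound: "2 * h \<le> ds ! i + 1" if i: "i < length ns" for i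
  proof -
    have c1: "int h \<le> \<lceil>real (ds ! i) / 2\<rceil>" using assms(6) l i by auto
    have c2: "real_of_int \<lceil>real (ds ! i) / 2\<rceil> < real (ds ! i) / 2 + 1"
      using ceiling_correct[of "real (ds ! i) / 2"] by linarith
    have "real_of_int (int h) \<le> real_of_int \<lceil>real (ds ! i) / 2\<rceil>"
      using c1 by (simp only: of_int_le_iff)
    then have "real h < real (ds ! i) / 2 + 1" using c2 by simp
    then have "real (2 * h) < real (ds ! i + 2)" by simp
    then show ?thesis by (simp only: of_nat_less_iff)
  qed
  define jb where "jb k i = (SOME j. j \<le> ns ! i \<and> x k i j \<noteq> 0)" for k i
  have jb: "jb k i \<le> ns ! i \<and> x k i (jb k i) \<noteq> 0" if "k < h" "i < length ns" for k i
  proof -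
    have "\<exists>j. j \<le> ns ! i \<and> x k i j \<noteq> 0" using valid that unfolding sv_valid_def by auto
    then show ?thesis unfolding jb_def by (rule someI_ex)
  qed
  define lam where "lam k l = (SOME q. fst q < length ns \<and> lin ns q (x l) = 0 \<and> lin ns q (x k) \<noteq> 0)" for k l
  have lam: "fst (lam k l) < length ns \<and> lin ns (lam k l) (x l) = 0 \<and> lin ns (lam k l) (x k) \<noteq> 0"
    if kl: "k < h" "l < h" "k \<noteq> l" for k l
  proof -
    have "\<not> (\<forall>i<length ns. \<exists>\<mu>. \<forall>j\<le>ns ! i. x l i j = \<mu> * x k i j)"
      using prop_coord[OF l, of "x l" "x k"] dist kl by blast
    then obtain i where i: "i < length ns" and np: "\<not> (\<exists>\<mu>. \<forall>j\<le>ns ! i. x l i j = \<mu> * x k i j)"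
      by blast
    have u: "\<exists>j\<le>ns ! i. x k i j \<noteq> 0" and v: "\<exists>j\<le>ns ! i. x l i j \<noteq> 0"
      using valid kl i unfolding sv_valid_def by auto
    obtain w where w: "(\<Sum>j\<le>ns ! i. w j * x l i j) = 0" "(\<Sum>j\<le>ns ! i. w j * x k i j) \<noteq> 0"
      using sep[OF u v np] by blast
    have "\<exists>q. fst q < length ns \<and> lin ns q (x l) = 0 \<and> lin ns q (x k) \<noteq> 0"
      by (rule exI[of _ "(i, w)"]) (use i w in \<open>simp add: lin_def\<close>)
    then show ?thesis unfolding lam_def by (rule someI_ex)
  qed
  define Ok where "Ok k = filter (\<lambda>l. l \<noteq> k) [0..<h]" for k
  define Q where "Q k = concat (map (\<lambda>l. [lam k l, lam k l]) (Ok k))" for k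
  define ek where "ek k i = (\<lambda>j::nat. if j = jb k i then (1::complex) else 0)" for k i
  define pad where "pad k B = concat (map (\<lambda>i. replicate (ds ! i - cnts ns B ! i) (i, ek k i)) [0..<length ns])" for k B
  define sp where "sp k i j = (i, \<lambda>j'. if j' = j then 1 else if j' = jb k i then - x k i j / x k i (jb k i) else 0)" for k i j
  have F1: "fst q < length ns \<and> lin ns q (x k) \<noteq> 0" if "k < h" "q \<in> set (Q k)" for k q
    using that lam unfolding Q_def Ok_def by auto
  have F2: "cnts ns (Q k) ! i < ds ! i" if "k < h" "i < length ns" for k i
  proof -
    have "cnts ns (Q k) ! i \<le> 2 * length (Ok k)"
      unfolding cnts_nth[OF that(2)] Q_def by (rule cnt_double)
    moreover have "length (Ok k) < h"
      unfolding Ok_def using length_filter_less[of k "[0..<h]" "\<lambda>l. l \<noteq> k"] that(1) by simp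
    ultimately show ?thesis using dbound[OF that(2)] by linarith
  qed
  have F3a: "\<forall>q\<in>set (pad k B). fst q < length ns" for k B
    unfolding pad_def by auto
  have F3b: "\<forall>q\<in>set (pad k B). lin ns q (x k) \<noteq> 0" if "k < h" for k B
    unfolding pad_def ek_def using jb[OF that] lin_ek by auto
  have F3c: "cnts ns (B @ pad k B) = ds" if "\<forall>i<length ns. cnts ns B ! i \<le> ds ! i" for k B
  proof (rule cnts_eq[OF l], intro allI impI)
    fix i assume i: "i < length ns"
    have "cnts ns (pad k B) ! i = ds ! i - cnts ns B ! i"
      unfolding cnts_nth[OF i] pad_def cnt_pad using i by simp
    then show "cnts ns (B @ pad k B) ! i = ds ! i"
      using cnts_append[OF i] that i by simp
  qed
  have F4: "\<exists>A C. Q k = A @ lam k l # lam k l # C" if lk: "l \<in> set (Ok k)" for k l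
  proof -
    obtain X Y where "Ok k = X @ l # Y" using split_list[of l "Ok k"] lk by blast
    then show ?thesis unfolding Q_def by auto
  qed
  define r where "r = length ns"
  define S1 :: "(nat \<times> (nat \<times> nat) option) set" where "S1 = (\<lambda>k. (k, None)) ` {..<h}"
  define T where "T = (SIGMA k:{..<h}. SIGMA i:{..<r}. {j. j \<le> ns ! i \<and> j \<noteq> jb k i})"
  define S2 :: "(nat \<times> (nat \<times> nat) option) set" where "S2 = (\<lambda>(k, i, j). (k, Some (i, j))) ` T"
  define S where "S = S1 \<union> S2"
  define vec where "vec s = (case snd s of None \<Rightarrow> sv_coord ns ds (x (fst s))
      | Some ij \<Rightarrow> tv ns ds (x (fst s)) (fst ij) (snd ij))" for s
  have memS: "s \<in> S \<longleftrightarrow> fst s < h \<and> (snd s = None \<or> (\<exists>i j. snd s = Some (i, j) \<and> i < length ns \<and> j \<le> ns ! i \<and> j \<noteq> jb (fst s) i))" for s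
    unfolding S_def S1_def S2_def T_def r_def by (cases s) force
  have finT: "finite T" unfolding T_def by (auto intro!: finite_SigmaI)
  have finS: "finite S" unfolding S_def S1_def S2_def using finT by auto
  define E where "E = sv_exps ns ds"
  define pair where "pair coef v = (\<Sum>a\<in>E. coef a * v a)" for coef :: "(nat \<Rightarrow> nat \<Rightarrow> nat) \<Rightarrow> complex" and v
  have pv: "pair coef (vec s) = (case snd s of None \<Rightarrow> plf ns L (x (fst s))
      | Some ij \<Rightarrow> deriv (\<lambda>t. plf ns L (sv_line (x (fst s)) (fst ij) (snd ij) t)) (x (fst s) (fst ij) (snd ij)))"
    if cf: "\<forall>y. plf ns L y = (\<Sum>a\<in>E. coef a * sv_monom ns y a)" for coef L s
  proof (cases "snd s")
    case None
    then show ?thesis unfolding pair_def vec_def using pairing(1)[OF cf[unfolded E_def]] by (simp add: E_def)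
  next
    case (Some ij)
    then show ?thesis unfolding pair_def vec_def using pairing(2)[OF cf[unfolded E_def]] by (simp add: E_def)
  qed
  have DZ: "plf ns (B @ pad k B) (x k') = 0 \<and> deriv (\<lambda>t. plf ns (B @ pad k B) (sv_line (x k') i j t)) (x k' i j) = 0"
    if "k < h" "k' < h" "k' \<noteq> k" "B = A @ lam k k' # lam k k' # C" for k k' B A C i j
  proof -
    have e: "B @ pad k B = A @ lam k k' # lam k k' # (C @ pad k B)" using that(4) by simp
    have z: "lin ns (lam k k') (x k') = 0" using lam[OF that(1,2)] that(3) by auto
    show ?thesis unfolding e using plf_double_zero[OF z] by simp
  qed
  have inOk: "k' \<in> set (Ok k)" if "k' < h" "k' \<noteq> k" for k k'
    using that unfolding Ok_def by auto
  have H1: "\<exists>coef R. R \<noteq> 0 \<and> (\<forall>s'\<in>S. pair coef (vec s') = (if s' = s then R else 0))"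
    if sS: "s \<in> S" and ss: "snd s = Some (i, j)" for s i j
  proof -
    define k where "k = fst s"
    have k: "k < h" and i: "i < length ns" and j: "j \<le> ns ! i" and jne: "j \<noteq> jb k i"
      using sS ss unfolding memS k_def by auto
    have s_eq: "s = (k, Some (i, j))" using ss k_def by (cases s) auto
    define B where "B = sp k i j # Q k"
    define L where "L = B @ pad k B"
    have Lf: "\<forall>q\<in>set L. fst q < length ns"
      unfolding L_def using F1[OF k] F3a[of k B] i by (auto simp: sp_def B_def)
    have Bc: "\<forall>i'<length ns. cnts ns B ! i' \<le> ds ! i'"
    proof (intro allI impI)
      fix i' assume i': "i' < length ns"
      have "cnts ns B ! i' = (if i = i' then 1 else 0) + cnts ns (Q k) ! i'"
        unfolding B_def cnts_nth[OF i'] by (simp add: sp_def)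
      then show "cnts ns B ! i' \<le> ds ! i'" using F2[OF k i'] by simp
    qed
    obtain coef where cf: "\<forall>y. plf ns L y = (\<Sum>a\<in>E. coef a * sv_monom ns y a)"
      using plf_forms'[OF Lf F3c[OF Bc, of k, folded L_def]] unfolding E_def by blast
    define R where "R = plf ns (Q k @ pad k B) (x k)"
    have R: "R \<noteq> 0" unfolding R_def using F1[OF k] F3b[OF k] by (intro plf_nonzero) auto
    have jbk: "jb k i \<le> ns ! i \<and> x k i (jb k i) \<noteq> 0" using jb[OF k i] .
    have z: "lin ns (sp k i j) (x k) = 0"
      unfolding sp_def using lin_sp[of "jb k i" ns i j "x k"] jbk j jne by simp
    have LC: "L = sp k i j # (Q k @ pad k B)" unfolding L_def B_def by simp
    have "pair coef (vec s') = (if s' = s then R else 0)" if s'S: "s' \<in> S" for s'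
    proof (cases "fst s' = k")
      case False
      have k': "fst s' < h" using s'S memS by auto
      obtain A C where AC: "Q k = A @ lam k (fst s') # lam k (fst s') # C"
        using F4[OF inOk[OF k' False]] by blast
      have BAC: "B = (sp k i j # A) @ lam k (fst s') # lam k (fst s') # C" unfolding B_def AC by simp
      have "pair coef (vec s') = 0"
        unfolding pv[OF cf] L_def using DZ[OF k k' False BAC] by (auto split: option.split)
      then show ?thesis using False s_eq by auto
    next
      case True
      show ?thesis
      proof (cases "snd s'")
        case None
        then have "pair coef (vec s') = 0"
          unfolding pv[OF cf] using True plf_single_zero(1)[OF z] LC by simp
        then show ?thesis using None ss by auto
      next
        case (Some ij)
        obtain i' j' where ij: "ij = (i', j')" by (cases ij)
        have i': "i' < length ns" and j': "j' \<le> ns ! i'" and jne': "j' \<noteq> jb k i'"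
          using s'S Some ij True unfolding memS by auto
        have "pair coef (vec s') = (if fst (sp k i j) = i' \<and> j' \<le> ns ! fst (sp k i j) then snd (sp k i j) j' else 0) * R"
          unfolding pv[OF cf] using Some ij True plf_single_zero(2)[OF z] LC R_def by simp
        also have "\<dots> = (if i' = i \<and> j' = j then R else 0)"
          using jne' j' by (auto simp: sp_def)
        also have "\<dots> = (if s' = s then R else 0)"
          using s_eq Some ij True by (cases s') auto
        finally show ?thesis .
      qed
    qed
    then show ?thesis using R by blast
  qed
  have H2: "\<exists>coef P. P \<noteq> 0 \<and> (\<forall>s'\<in>S. snd s' = None \<longrightarrow> pair coef (vec s') = (if fst s' = k then P else 0))
       \<and> (\<forall>s'\<in>S. fst s' \<noteq> k \<longrightarrow> pair coef (vec s') = 0)"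
    if k: "k < h" for k
  proof -
    define B where "B = Q k"
    define L where "L = B @ pad k B"
    have Lf: "\<forall>q\<in>set L. fst q < length ns"
      unfolding L_def using F1[OF k] F3a[of k B] by (auto simp: B_def)
    have Bc: "\<forall>i'<length ns. cnts ns B ! i' \<le> ds ! i'"
      using F2[OF k] unfolding B_def by (simp add: less_imp_le)
    obtain coef where cf: "\<forall>y. plf ns L y = (\<Sum>a\<in>E. coef a * sv_monom ns y a)"
      using plf_forms'[OF Lf F3c[OF Bc, of k, folded L_def]] unfolding E_def by blast
    define P where "P = plf ns L (x k)"
    have P: "P \<noteq> 0" unfolding P_def L_def B_def using F1[OF k] F3b[OF k] by (intro plf_nonzero) auto
    have z: "pair coef (vec s') = 0" if s'S: "s' \<in> S" and ne: "fst s' \<noteq> k" for s'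
    proof -
      have k': "fst s' < h" using s'S memS by auto
      obtain A C where AC: "B = A @ lam k (fst s') # lam k (fst s') # C"
        using F4[OF inOk[OF k' ne]] unfolding B_def by blast
      show ?thesis
        unfolding pv[OF cf] L_def using DZ[OF k k' ne AC] by (auto split: option.split)
    qed
    have "pair coef (vec s') = (if fst s' = k then P else 0)" if "s' \<in> S" "snd s' = None" for s'
      using z[OF that(1)] that(2) unfolding pv[OF cf] P_def by auto
    then show ?thesis using P z by blast
  qed
  have pair_lin: "pair coef (\<Sum>s\<in>S. fscale (c s) (vec s)) = (\<Sum>s\<in>S. c s * pair coef (vec s))" for coef c
    unfolding pair_def by (rule pair_sum)
  have pair0: "pair coef 0 = 0" for coef unfolding pair_def by simp
  have indep: "\<forall>s\<in>S. c s = 0" if c0: "(\<Sum>s\<in>S. fscale (c s) (vec s)) = 0" for c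
  proof -
    have key: "(\<Sum>s\<in>S. c s * pair coef (vec s)) = 0" for coef
      using pair_lin[of coef c] c0 pair0 by simp
    have Csome: "c s = 0" if sS: "s \<in> S" and ss: "snd s \<noteq> None" for s
    proof -
      obtain i j where ij: "snd s = Some (i, j)" using ss by auto
      obtain coef R where R: "R \<noteq> 0" and pr: "\<forall>s'\<in>S. pair coef (vec s') = (if s' = s then R else 0)"
        using H1[OF sS ij] by blast
      have "(\<Sum>s'\<in>S. c s' * pair coef (vec s')) = (\<Sum>s'\<in>S. if s' = s then c s' * R else 0)"
        using pr by (intro sum.cong) auto
      also have "\<dots> = c s * R" using finS sS by (simp add: sum.delta')
      finally show ?thesis using key[of coef] R by simp
    qed
    show ?thesis
    proof
      fix s assume sS: "s \<in> S"
      show "c s = 0"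
      proof (cases "snd s = None")
        case False then show ?thesis using Csome sS by blast
      next
        case True
        have k: "fst s < h" using sS memS by auto
        obtain coef P where P: "P \<noteq> 0"
          and p1: "\<forall>s'\<in>S. snd s' = None \<longrightarrow> pair coef (vec s') = (if fst s' = fst s then P else 0)"
          and p2: "\<forall>s'\<in>S. fst s' \<noteq> fst s \<longrightarrow> pair coef (vec s') = 0"
          using H2[OF k] by blast
        have "(\<Sum>s'\<in>S. c s' * pair coef (vec s')) = (\<Sum>s'\<in>S. if s' = s then c s' * P else 0)"
        proof (intro sum.cong refl)
          fix s' assume s'S: "s' \<in> S"
          show "c s' * pair coef (vec s') = (if s' = s then c s' * P else 0)"
          proof (cases "snd s' = None")
            case True
            then show ?thesis using p1 s'S \<open>snd s = None\<close> by (cases s; cases s') auto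
          next
            case False
            then have "s' \<noteq> s" using \<open>snd s = None\<close> by auto
            moreover have "c s' = 0" using Csome s'S False by blast
            ultimately show ?thesis by simp
          qed
        qed
        also have "\<dots> = c s * P" using finS sS by (simp add: sum.delta')
        finally show ?thesis using key[of coef] P by simp
      qed
    qed
  qed
  have inj: "inj_on vec S"
  proof (rule inj_onI, rule ccontr)
    fix s t assume sS: "s \<in> S" and tS: "t \<in> S" and eq: "vec s = vec t" and ne: "s \<noteq> t"
    show False
    proof (cases "snd s = None \<and> snd t = None")
      case False
      then obtain u v where uS: "u \<in> S" and vS: "v \<in> S" and uv: "u \<noteq> v" "vec u = vec v" and su: "snd u \<noteq> None"
        using sS tS eq ne by (metis)
      obtain i j where ij: "snd u = Some (i, j)" using su by auto
      obtain coef R where R: "R \<noteq> 0" and pr: "\<forall>s'\<in>S. pair coef (vec s') = (if s' = u then R else 0)"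
        using H1[OF uS ij] by blast
      show False using pr uS vS uv R by metis
    next
      case True
      have k: "fst s < h" using sS memS by auto
      have fne: "fst s \<noteq> fst t" using True ne by (cases s; cases t) auto
      obtain coef P where P: "P \<noteq> 0"
        and p1: "\<forall>s'\<in>S. snd s' = None \<longrightarrow> pair coef (vec s') = (if fst s' = fst s then P else 0)"
        using H2[OF k] by blast
      show False using p1 sS tS True eq fne P by metis
    qed
  qed
  have cardS: "card S = h * sv_n ns + h"
  proof -
    have c1: "card S1 = h" unfolding S1_def by (subst card_image) (auto simp: inj_on_def)
    have c2: "card S2 = card T" unfolding S2_def by (subst card_image) (auto simp: inj_on_def)
    have cT: "card T = h * sv_n ns"
    proof -
      have "card T = (\<Sum>k<h. \<Sum>i<r. card {j. j \<le> ns ! i \<and> j \<noteq> jb k i})"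
        unfolding T_def by (subst card_SigmaI) (auto intro!: sum.cong card_SigmaI finite_SigmaI)
      also have "\<dots> = (\<Sum>k<h. \<Sum>i<r. ns ! i)"
        using jb unfolding r_def by (intro sum.cong refl card_skip) auto
      also have "\<dots> = h * sv_n ns"
        unfolding sv_n_def sum_list_sum_nth r_def atLeast0LessThan by simp
      finally show ?thesis .
    qed
    have "S1 \<inter> S2 = {}" unfolding S1_def S2_def by auto
    then have "card S = card S1 + card S2"
      unfolding S_def using finS S_def by (intro card_Un_disjoint) auto
    then show ?thesis using c1 c2 cT by simp
  qed
  define VV where "VV = (\<Union>k<h. sv_tangent_gens ns ds (x k))"
  interpret vs: vector_space "fscale :: complex \<Rightarrow> ((nat \<Rightarrow> nat \<Rightarrow> nat) \<Rightarrow> complex) \<Rightarrow> _"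
    by (rule vs_fscale)
  have r0: "0 < length ns" using assms(1) .
  have d0: "0 < ds ! 0" using assms(3) r0 by auto
  have tvin: "tv ns ds (x k) i j \<in> vs.span VV" if "k < h" "i < length ns" "j \<le> ns ! i" for k i j
    using tv_in[OF that(2,3), of ds "x k"] that(1) unfolding VV_def by (intro vs.span_base) blast
  have sub: "vec ` S \<subseteq> vs.span VV"
  proof
    fix v assume "v \<in> vec ` S"
    then obtain s where sS: "s \<in> S" and v: "v = vec s" by blast
    have k: "fst s < h" using sS memS by auto
    show "v \<in> vs.span VV"
    proof (cases "snd s")
      case None
      have e: "sv_coord ns ds (x (fst s)) = fscale (1 / of_nat (ds ! 0))
          (\<Sum>j\<le>ns ! 0. fscale (x (fst s) 0 j) (tv ns ds (x (fst s)) 0 j))"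
        unfolding euler[OF r0 l] using d0 by (simp add: fscale_def fun_eq_iff)
      have "sv_coord ns ds (x (fst s)) \<in> vs.span VV"
        unfolding e by (intro vs.span_scale vs.span_sum tvin[OF k r0]) auto
      then show ?thesis using v None by (simp add: vec_def)
    next
      case (Some ij)
      then show ?thesis using v sS tvin[OF k] unfolding memS vec_def by auto
    qed
  qed
  have indepA: "vs.independent (vec ` S)"
  proof (rule vs.independent_if_scalars_zero)
    show "finite (vec ` S)" using finS by simp
  next
    fix f v assume sum0: "(\<Sum>y\<in>vec ` S. fscale (f y) y) = 0" and vin: "v \<in> vec ` S"
    have "(\<Sum>s\<in>S. fscale (f (vec s)) (vec s)) = 0"
      using sum0 by (simp add: sum.reindex[OF inj])
    then have "\<forall>s\<in>S. f (vec s) = 0" by (rule indep)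
    then show "f v = 0" using vin by auto
  qed
  have finVV: "finite VV"
  proof -
    have "sv_tangent_gens ns ds (x k) = (\<lambda>(i, j). tv ns ds (x k) i j) ` (SIGMA i:{..<length ns}. {..ns ! i})" for k
      unfolding sv_tangent_gens_def tv_def sv_line_def by auto
    then show ?thesis unfolding VV_def by (auto intro!: finite_SigmaI)
  qed
  obtain BB where BB: "BB \<subseteq> vs.span VV" "vs.independent BB" "vs.span VV \<subseteq> vs.span BB" "card BB = vs.dim (vs.span VV)"
    using vs.basis_exists by blast
  have finBB: "finite BB" using vs.independent_span_bound[OF finVV BB(2,1)] by blast
  have "card (vec ` S) \<le> card BB"
    using vs.independent_span_bound[OF finBB indepA] sub BB(3) by blast
  then have "card (vec ` S) \<le> vs.dim (vs.span VV)" using BB(4) by simp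
  then have "h * sv_n ns + h \<le> vs.dim VV"
    using card_image[OF inj] cardS by simp
  then have "int (h * sv_n ns + h) \<le> int (vs.dim VV)" by (simp only: of_nat_le_iff)
  then have "int (h * sv_n ns + h) - 1 \<le> proj_span_dim VV"
    unfolding proj_span_dim_def by linarith
  then show False using lt unfolding VV_def by linarith
qed

end
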